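(* Let $\mathbf{S}=(S_n)_{n\in\mathbb{N}}$ be a stationary information source with finite (totally ordered) alphabet $A$ and sequence-space model $(A^{\mathbb{N}},\mathcal{Z},m,\sigma)$, and let $\{m_s:s\in A^{\mathbb{N}}\}$ be the ergodic decomposition of $m$. Assume that $s\mapsto h_{m_s}(\mathbf{S})$ is $m$-integrable. Then \[ \liminf_{L\to\infty}\frac{1}{L-1}H_m(R_1^L)\ \ge\ h_m(\mathbf{S}). \]
   Context: $m$ is the shift-invariant probability measure on $A^{\mathbb{N}}$ induced by the process, $\mathcal{Z}$ the product $\sigma$-algebra and $\sigma$ the left shift. The ergodic decomposition is a family of $\sigma$-invariant ergodic probability measures $m_s$ with $m_{\sigma(s)}=m_s$ and $m(C)=\int_{A^{\mathbb{N}}}m_s(C)\,dm(s)$ for all $C\in\mathcal{Z}$. For a shift-invariant measure $\nu$, $h_\nu(\mathbf{S})=\lim_{L\to\infty}\frac1L H_\nu(S_1^L)$ is the metric (Shannon) entropy rate, where $H_\nu$ is Shannon entropy (base 2) of the distribution of the word $S_1^L=S_1\cdots S_L$ under $\nu$. Rank variables: $R_n=\sum_{i=1}^n\delta(S_i\le S_n)$, with $\delta(P)=1$ if $P$ holds and $0$ otherwise, and $R_1^L=R_1\cdots R_L$. *)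

theory Defs
  imports "HOL-Probability.Probability"
begin

text \<open>Sequence space A^N over a finite totally ordered alphabet 'a, realised as
  functions nat => 'a; coordinate n (0-based) is the symbol S_(n+1).\<close>

definition seq_space :: "(nat \<Rightarrow> 'a) measure" where
  "seq_space = Pi\<^sub>M UNIV (\<lambda>_. count_space UNIV)"

definition Z :: "(nat \<Rightarrow> 'a) set set" where
  "Z = sets seq_space"

definition shift :: "(nat \<Rightarrow> 'a) \<Rightarrow> (nat \<Rightarrow> 'a)" where
  "shift x = (\<lambda>n. x (Suc n))"

definition shift_invariant_prob :: "(nat \<Rightarrow> 'a) measure \<Rightarrow> bool" where
  "shift_invariant_prob \<nu> \<longleftrightarrow> prob_space \<nu> \<and> sets \<nu> = Z \<and>
     (\<forall>C\<in>Z. emeasure \<nu> (shift -` C) = emeasure \<nu> C)"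

definition ergodic_prob :: "(nat \<Rightarrow> 'a) measure \<Rightarrow> bool" where
  "ergodic_prob \<nu> \<longleftrightarrow> shift_invariant_prob \<nu> \<and>
     (\<forall>C\<in>Z. shift -` C = C \<longrightarrow> measure \<nu> C = 0 \<or> measure \<nu> C = 1)"

text \<open>Shannon entropy (base 2) of the distribution of a finitely-valued random variable X
  under \<nu>; convention 0 log 0 = 0 (automatic, since log 2 0 = 0 in Isabelle).\<close>
definition shannon_entropy :: "'b measure \<Rightarrow> ('b \<Rightarrow> 'c) \<Rightarrow> real" where
  "shannon_entropy \<nu> X =
     - (\<Sum>v\<in>X ` space \<nu>. measure \<nu> (X -` {v} \<inter> space \<nu>) *
                              log 2 (measure \<nu> (X -` {v} \<inter> space \<nu>)))"

definition block :: "nat \<Rightarrow> (nat \<Rightarrow> 'a) \<Rightarrow> 'a list" where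
  "block L x = map x [0..<L]"

definition rank_var :: "nat \<Rightarrow> (nat \<Rightarrow> 'a::linorder) \<Rightarrow> nat" where
  "rank_var n x = card {i\<in>{1..n}. x (i - 1) \<le> x (n - 1)}"

definition rank_block :: "nat \<Rightarrow> (nat \<Rightarrow> 'a::linorder) \<Rightarrow> nat list" where
  "rank_block L x = map (\<lambda>n. rank_var n x) [1..<Suc L]"

definition entropy_rate :: "(nat \<Rightarrow> 'a) measure \<Rightarrow> real" where
  "entropy_rate \<nu> = lim (\<lambda>L. shannon_entropy \<nu> (block L) / real L)"

end

theory Submission
  imports Defs "HOL-Real_Asymp.Real_Asymp"
begin


lemma space_seq: "space (seq_space :: (nat \<Rightarrow> 'a) measure) = UNIV"
  unfolding seq_space_def by (simp add: space_PiM)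

lemma cyl: "{x::nat\<Rightarrow>'a. \<forall>i<N. x i = c i} \<in> sets seq_space"
proof -
  have "{x \<in> space seq_space. \<forall>i<N. x i = c i} \<in> sets seq_space"
    unfolding seq_space_def by measurable
  then show ?thesis by (simp add: space_seq)
qed

lemma shift_meas: "shift \<in> measurable seq_space seq_space"
  unfolding seq_space_def shift_def
  by (rule measurable_PiM_single') measurable

lemma finite_lists_len: "finite {w::('a::finite) list. length w = N}"
  using finite_lists_length_eq[of "UNIV::'a set" N] by simp

lemma block_nth: "i < N \<Longrightarrow> block N x ! i = x i" by (simp add: block_def)
lemma length_block[simp]: "length (block N x) = N" by (simp add: block_def)

lemma space_Z: assumes "sets M = Z" shows "space M = UNIV"
  using sets_eq_imp_space_eq[of M seq_space] assms space_seq unfolding Z_def by simp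

lemma fin_dep_simple:
  fixes f :: "(nat \<Rightarrow> 'a::finite) \<Rightarrow> 'b" and M
  assumes sM: "sets M = Z" and dep: "\<And>x y. (\<forall>i<N. x i = y i) \<Longrightarrow> f x = f y"
  shows "simple_function M f"
proof -
  have sp: "space M = UNIV" using space_Z[OF sM] .
  have img: "f ` space M = (\<lambda>w. f (\<lambda>i. w ! i)) ` {w. length w = N}"
  proof
    show "f ` space M \<subseteq> (\<lambda>w. f (\<lambda>i. w ! i)) ` {w. length w = N}"
    proof
      fix v assume "v \<in> f ` space M"
      then obtain x where v: "v = f x" by auto
      have "f x = f (\<lambda>i. block N x ! i)" by (rule dep) (simp add: block_nth)
      then show "v \<in> (\<lambda>w. f (\<lambda>i. w ! i)) ` {w. length w = N}" using v by auto
    qed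
    show "(\<lambda>w. f (\<lambda>i. w ! i)) ` {w. length w = N} \<subseteq> f ` space M" using sp by auto
  qed
  have fin: "finite (f ` space M)" unfolding img using finite_lists_len by auto
  have pre: "f -` {v} \<inter> space M \<in> sets M" for v
  proof -
    have eq: "f -` {v} \<inter> space M = (\<Union>w\<in>{w. length w = N \<and> f (\<lambda>i. w ! i) = v}. {x. \<forall>i<N. x i = w ! i})"
    proof (intro equalityI subsetI)
      fix x assume "x \<in> f -` {v} \<inter> space M"
      then have fx: "f x = v" by auto
      have fb: "f x = f (\<lambda>i. block N x ! i)" by (rule dep) (simp add: block_nth)
      show "x \<in> (\<Union>w\<in>{w. length w = N \<and> f (\<lambda>i. w ! i) = v}. {x. \<forall>i<N. x i = w ! i})"
      proof (rule UN_I[of "block N x"])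
        show "block N x \<in> {w. length w = N \<and> f (\<lambda>i. w ! i) = v}" using fx fb by simp
        show "x \<in> {x'. \<forall>i<N. x' i = block N x ! i}" by (simp add: block_nth)
      qed
    next
      fix x assume "x \<in> (\<Union>w\<in>{w. length w = N \<and> f (\<lambda>i. w ! i) = v}. {x. \<forall>i<N. x i = w ! i})"
      then obtain w where w: "f (\<lambda>i. w ! i) = v" "\<forall>i<N. x i = w ! i" by auto
      have "f x = f (\<lambda>i. w ! i)" by (rule dep) (use w in auto)
      then show "x \<in> f -` {v} \<inter> space M" using w sp by auto
    qed
    have "(\<Union>w\<in>{w. length w = N \<and> f (\<lambda>i. w ! i) = v}. {x. \<forall>i<N. x i = w ! i}) \<in> sets seq_space"
      by (intro sets.finite_UN) (auto intro: cyl rev_finite_subset[OF finite_lists_len])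
    then show ?thesis using eq sM unfolding Z_def by simp
  qed
  show ?thesis unfolding simple_function_def using fin pre by auto
qed

lemma sh_entropy:
  assumes P: "prob_space M" and X: "simple_function M X"
  shows "shannon_entropy M X = prob_space.entropy M 2 (count_space (X ` space M)) X"
proof -
  interpret prob_space M by fact
  interpret information_space M 2 by standard simp
  show ?thesis unfolding shannon_entropy_def
    by (subst entropy_simple_distributed[OF simple_distributedI[OF X measure_nonneg refl]]) simp
qed

lemma sh_subadd:
  assumes P: "prob_space M" and X: "simple_function M X" and Y: "simple_function M Y"
  shows "shannon_entropy M (\<lambda>x. (X x, Y x)) \<le> shannon_entropy M X + shannon_entropy M Y"
proof -
  interpret prob_space M by fact
  interpret information_space M 2 by standard simp
  have XY: "simple_function M (\<lambda>x. (X x, Y x))" using simple_function_Pair[OF X Y] .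
  show ?thesis
    using entropy_chain_rule[OF X Y] conditional_entropy_less_eq_entropy[OF Y X]
      sh_entropy[OF P X] sh_entropy[OF P Y] sh_entropy[OF P XY] by linarith
qed

lemma sh_dp:
  assumes P: "prob_space M" and X: "simple_function M X"
  shows "shannon_entropy M (f \<circ> X) \<le> shannon_entropy M X"
proof -
  interpret prob_space M by fact
  interpret information_space M 2 by standard simp
  have fX: "simple_function M (f \<circ> X)" using simple_function_compose[OF X] .
  show ?thesis
    using entropy_data_processing[OF X, of f] sh_entropy[OF P X] sh_entropy[OF P fX] by linarith
qed

lemma sh_card:
  assumes P: "prob_space M" and X: "simple_function M X"
  shows "shannon_entropy M X \<le> log 2 (real (card (X ` space M)))"
proof -
  interpret prob_space M by fact
  interpret information_space M 2 by standard simp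
  show ?thesis
    using entropy_le_card[OF simple_distributedI[OF X measure_nonneg refl]] sh_entropy[OF P X] by linarith
qed

lemma sh_nonneg: assumes P: "prob_space M" shows "shannon_entropy M X \<ge> 0"
  unfolding shannon_entropy_def
proof -
  interpret prob_space M by fact
  have "measure M A * log 2 (measure M A) \<le> 0" for A
  proof (cases "measure M A = 0")
    case False
    then have "measure M A > 0" using measure_nonneg[of M A] by linarith
    moreover have "measure M A \<le> 1" by (rule prob_le_1)
    ultimately have "log 2 (measure M A) \<le> 0" by simp
    then show ?thesis using \<open>measure M A > 0\<close> by (simp add: mult_nonneg_nonpos)
  qed simp
  then show "0 \<le> - (\<Sum>v\<in>X ` space M. measure M (X -` {v} \<inter> space M) * log 2 (measure M (X -` {v} \<inter> space M)))"
    by (simp add: sum_nonpos)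
qed



lemma subadd_mult:
  fixes a :: "nat \<Rightarrow> real"
  assumes sub: "\<And>m n. a (m+n) \<le> a m + a n"
  shows "a (q*k + r) \<le> real q * a k + a r"
proof (induction q)
  case (Suc q)
  have "a (Suc q * k + r) = a (k + (q*k + r))" by (simp add: algebra_simps)
  also have "\<dots> \<le> a k + a (q*k + r)" by (rule sub)
  also have "\<dots> \<le> a k + (real q * a k + a r)" using Suc by simp
  finally show ?case by (simp add: algebra_simps)
qed simp

lemma fekete:
  fixes a :: "nat \<Rightarrow> real"
  assumes nn: "\<And>n. a n \<ge> 0" and sub: "\<And>m n. a (m+n) \<le> a m + a n"
  shows "convergent (\<lambda>n. a n / real n)"
proof -
  define S where "S = (\<lambda>n. a n / real n) ` {1..}"
  define l where "l = Inf S"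
  have bdd: "bdd_below S" unfolding S_def using nn by (auto intro!: bdd_belowI[of _ 0])
  have ne: "S \<noteq> {}" unfolding S_def by auto
  have low: "l \<le> a n / real n" if "n \<ge> 1" for n
    unfolding l_def using that bdd by (intro cInf_lower) (auto simp: S_def)
  have "(\<lambda>n. a n / real n) \<longlonglongrightarrow> l"
  proof (rule LIMSEQ_I)
    fix r :: real assume r: "r > 0"
    have "Inf S < l + r/2" using r unfolding l_def by simp
    from cInf_lessD[OF ne this] obtain k where k: "k \<ge> 1" "a k / real k < l + r/2"
      unfolding S_def by auto
    define C where "C = Max (a ` {..<k})"
    have C: "a j \<le> C" if "j < k" for j unfolding C_def using that by (intro Max_ge) auto
    have C0: "C \<ge> 0" using C[of 0] nn[of 0] k by fastforce
    obtain N :: nat where N: "real N > 2*C/r" using reals_Archimedean2 by blast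
    show "\<exists>no. \<forall>n\<ge>no. norm (a n / real n - l) < r"
    proof (intro exI[of _ "max 1 N"] allI impI)
      fix n assume n: "max 1 N \<le> n"
      have n1: "n \<ge> 1" using n by simp
      have "a n = a ((n div k) * k + n mod k)" by simp
      also have "\<dots> \<le> real (n div k) * a k + a (n mod k)" by (rule subadd_mult[OF sub, of "n div k" k "n mod k"])
      also have "\<dots> \<le> real n / real k * a k + C"
      proof -
        have "real (n div k) \<le> real n / real k" by (rule of_nat_div_le_of_nat)
        then have "real (n div k) * a k \<le> real n / real k * a k" using nn[of k] by (rule mult_right_mono)
        moreover have "a (n mod k) \<le> C" using k by (intro C) simp
        ultimately show ?thesis by linarith
      qed
      finally have an: "a n \<le> real n / real k * a k + C" .
      have "a n / real n \<le> (real n / real k * a k + C) / real n"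
        using an n1 by (intro divide_right_mono) auto
      also have "\<dots> = a k / real k + C / real n" using n1 by (simp add: field_simps)
      finally have A: "a n / real n \<le> a k / real k + C / real n" .
      have "real n \<ge> real N" using n by simp
      then have "real n > 2 * C / r" using N by linarith
      then have "C / real n < r / 2" using r n1 C0 by (simp add: field_simps)
      then have "a n / real n < l + r" using A k by linarith
      moreover have "l \<le> a n / real n" using low n1 .
      ultimately show "norm (a n / real n - l) < r" using r by simp
    qed
  qed
  then show ?thesis by (rule convergentI)
qed

definition cnt :: "nat \<Rightarrow> (nat \<Rightarrow> 'a::linorder) \<Rightarrow> 'a \<Rightarrow> nat" where
  "cnt L x = (\<lambda>a. card {i. i < L \<and> x i \<le> a})"

lemma rank_var_Suc: "rank_var (Suc L) x = cnt (Suc L) x (x L)"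
proof -
  have "{i\<in>{1..Suc L}. x (i - 1) \<le> x (Suc L - 1)} = Suc ` {i. i < Suc L \<and> x i \<le> x L}"
  proof (intro equalityI subsetI)
    fix i assume "i \<in> {i\<in>{1..Suc L}. x (i - 1) \<le> x (Suc L - 1)}"
    then have "i = Suc (i - 1)" "i - 1 \<in> {i. i < Suc L \<and> x i \<le> x L}" by auto
    then show "i \<in> Suc ` {i. i < Suc L \<and> x i \<le> x L}" by (metis imageI)
  next
    fix i assume "i \<in> Suc ` {i. i < Suc L \<and> x i \<le> x L}"
    then obtain j where j: "i = Suc j" "j < Suc L" "x j \<le> x L" by blast
    then show "i \<in> {i\<in>{1..Suc L}. x (i - 1) \<le> x (Suc L - 1)}" by simp
  qed
  then show ?thesis unfolding rank_var_def cnt_def by (simp add: card_image)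
qed

lemma rank_block_Suc: "rank_block (Suc L) x = rank_block L x @ [rank_var (Suc L) x]"
  by (simp add: rank_block_def)

lemma cnt_Suc: "cnt (Suc L) z a = cnt L z a + (if z L \<le> a then 1 else 0)"
proof (cases "z L \<le> a")
  case True
  then have "{i. i < Suc L \<and> z i \<le> a} = insert L {i. i < L \<and> z i \<le> a}" by auto
  then show ?thesis using True unfolding cnt_def by simp
next
  case False
  then have "{i. i < Suc L \<and> z i \<le> a} = {i. i < L \<and> z i \<le> a}" by (auto simp: less_Suc_eq)
  then show ?thesis using False unfolding cnt_def by simp
qed

lemma cnt_strict:
  fixes z :: "nat \<Rightarrow> 'a::linorder"
  assumes "u < z L" shows "cnt (Suc L) z u < cnt (Suc L) z (z L)"
  unfolding cnt_def
proof (rule psubset_card_mono)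
  show "finite {i. i < Suc L \<and> z i \<le> z L}" by simp
  have sub: "{i. i < Suc L \<and> z i \<le> u} \<subseteq> {i. i < Suc L \<and> z i \<le> z L}"
  proof
    fix i assume "i \<in> {i. i < Suc L \<and> z i \<le> u}"
    then have "i < Suc L" "z i \<le> u" by auto
    moreover have "u \<le> z L" using assms by (rule less_imp_le)
    ultimately show "i \<in> {i. i < Suc L \<and> z i \<le> z L}" by simp
  qed
  have "L \<in> {i. i < Suc L \<and> z i \<le> z L}" by simp
  moreover have "L \<notin> {i. i < Suc L \<and> z i \<le> u}" using assms by (simp add: not_le)
  ultimately show "{i. i < Suc L \<and> z i \<le> u} \<subset> {i. i < Suc L \<and> z i \<le> z L}"
    using sub by blast
qed

lemma rank_cnt_inj:
  fixes x y :: "nat \<Rightarrow> 'a::linorder"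
  shows "rank_block L x = rank_block L y \<Longrightarrow> cnt L x = cnt L y \<Longrightarrow> \<forall>i<L. x i = y i"
proof (induction L)
  case 0 then show ?case by simp
next
  case (Suc L)
  have rb: "rank_block L x = rank_block L y" "rank_var (Suc L) x = rank_var (Suc L) y"
    using Suc.prems(1) by (simp_all add: rank_block_Suc)
  have last: "x L = y L"
  proof (rule ccontr)
    assume ne: "x L \<noteq> y L"
    show False
    proof (cases "x L < y L")
      case True
      have "cnt (Suc L) y (x L) < cnt (Suc L) y (y L)" using cnt_strict[of "x L" y L] True .
      also have "\<dots> = cnt (Suc L) x (x L)" using rb(2) by (simp add: rank_var_Suc)
      also have "\<dots> = cnt (Suc L) y (x L)" using Suc.prems(2) by simp
      finally show False by simp
    next
      case False
      then have lt: "y L < x L" using ne by simp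
      have "cnt (Suc L) x (y L) < cnt (Suc L) x (x L)" using cnt_strict[of "y L" x L] lt .
      also have "\<dots> = cnt (Suc L) y (y L)" using rb(2) by (simp add: rank_var_Suc)
      also have "\<dots> = cnt (Suc L) x (y L)" using Suc.prems(2) by simp
      finally show False by simp
    qed
  qed
  have "cnt L x = cnt L y"
  proof
    fix a
    have "cnt (Suc L) x a = cnt (Suc L) y a" using Suc.prems(2) by simp
    then show "cnt L x a = cnt L y a" using last by (simp add: cnt_Suc)
  qed
  then have "\<forall>i<L. x i = y i" using Suc.IH rb(1) by blast
  then show ?case using last by (auto simp: less_Suc_eq)
qed

lemma rank_block_dep:
  assumes h: "\<forall>i<L. x i = y i" shows "rank_block L x = rank_block L y"
proof -
  have rv: "rank_var n x = rank_var n y" if n: "n \<le> L" "1 \<le> n" for n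
  proof -
    have "{i\<in>{1..n}. x (i-1) \<le> x (n-1)} = {i\<in>{1..n}. y (i-1) \<le> y (n-1)}"
    proof (rule Collect_cong)
      fix i
      show "(i\<in>{1..n} \<and> x (i-1) \<le> x (n-1)) = (i\<in>{1..n} \<and> y (i-1) \<le> y (n-1))"
      proof (cases "i \<in> {1..n}")
        case True
        then have "i - 1 < L" "n - 1 < L" using n by auto
        then have "x (i-1) = y (i-1)" "x (n-1) = y (n-1)" using h by blast+
        then show ?thesis by simp
      qed auto
    qed
    then show ?thesis by (simp add: rank_var_def)
  qed
  show ?thesis unfolding rank_block_def
  proof (rule map_cong[OF refl])
    fix n assume "n \<in> set [1..<Suc L]"
    then have "n \<le> L" "1 \<le> n" by auto
    then show "rank_var n x = rank_var n y" by (rule rv)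
  qed
qed

lemma cnt_dep:
  assumes h: "\<forall>i<L. x i = y i" shows "cnt L x = cnt L y"
proof
  fix a
  have "{i. i < L \<and> x i \<le> a} = {i. i < L \<and> y i \<le> a}" using h by auto
  then show "cnt L x a = cnt L y a" by (simp add: cnt_def)
qed

lemma block_dep:
  assumes h: "\<forall>i<L. x i = y i" shows "block L x = block L y"
  unfolding block_def
proof (rule map_cong[OF refl])
  fix n assume "n \<in> set [0..<L]"
  then show "x n = y n" using h by simp
qed

lemma cnt_card: "card (range (cnt L :: (nat \<Rightarrow> 'a::{finite,linorder}) \<Rightarrow> _)) \<le> (Suc L) ^ CARD('a)"
proof -
  have sub: "range (cnt L :: (nat \<Rightarrow> 'a) \<Rightarrow> _) \<subseteq> PiE UNIV (\<lambda>_. {..L})"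
  proof
    fix f assume "f \<in> range (cnt L :: (nat \<Rightarrow> 'a) \<Rightarrow> _)"
    then obtain x :: "nat \<Rightarrow> 'a" where f: "f = cnt L x" by auto
    have "f a \<le> L" for a
    proof -
      have "card {i. i < L \<and> x i \<le> a} \<le> card {..<L}" by (intro card_mono) auto
      then show ?thesis using f by (simp add: cnt_def)
    qed
    then show "f \<in> PiE UNIV (\<lambda>_. {..L})" by auto
  qed
  have "card (range (cnt L :: (nat \<Rightarrow> 'a) \<Rightarrow> _)) \<le> card (PiE (UNIV::'a set) (\<lambda>_. {..L}))"
    by (intro card_mono sub) (simp add: finite_PiE)
  also have "\<dots> = (Suc L) ^ CARD('a)" by (simp add: card_PiE)
  finally show ?thesis .
qed

lemma funpow_shift: "(shift ^^ k) x = (\<lambda>n. x (n + k))"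
proof (induction k)
  case 0 show ?case by simp
next
  case (Suc k)
  have "(shift ^^ Suc k) x = shift ((shift ^^ k) x)" by simp
  also have "\<dots> = (\<lambda>n. x (n + Suc k))" unfolding Suc shift_def by simp
  finally show ?case .
qed

lemma block_split: "block (L + M) x = block L x @ block M ((shift ^^ L) x)"
proof -
  have e1: "[0..<L+M] = [0..<L] @ [L..<L+M]" by (rule upt_add_eq_append) simp
  have e2: "map (\<lambda>n. x (n + L)) [0..<M] = map x [L..<L+M]"
  proof (rule nth_equalityI)
    show "length (map (\<lambda>n. x (n + L)) [0..<M]) = length (map x [L..<L+M])" by simp
    fix i assume "i < length (map (\<lambda>n. x (n + L)) [0..<M])"
    then have i: "i < M" by simp
    have "map x [L..<L+M] ! i = x (L + i)" using i by (simp only: nth_map_upt)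
    moreover have "map (\<lambda>n. x (n + L)) [0..<M] ! i = x (i + L)" using i by (simp only: nth_map_upt) simp
    ultimately show "map (\<lambda>n. x (n + L)) [0..<M] ! i = map x [L..<L+M] ! i"
      by (simp add: add.commute)
  qed
  show ?thesis unfolding block_def funpow_shift e1 map_append e2 ..
qed



lemma funpow_meas: "(shift ^^ k) \<in> measurable seq_space seq_space"
proof (induction k)
  case 0 show ?case by (simp add: measurable_id)
next
  case (Suc k)
  show ?case by (subst funpow.simps(2)) (rule measurable_comp[OF Suc shift_meas])
qed

lemma stat_measure:
  assumes st: "shift_invariant_prob m" and C: "C \<in> Z"
  shows "measure m ((shift ^^ k) -` C) = measure m C"
proof (induction k)
  case 0 show ?case by simp
next
  case (Suc k)
  have "(shift ^^ k) -` C \<inter> space seq_space \<in> sets seq_space"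
    using funpow_meas C unfolding Z_def by (rule measurable_sets)
  then have meas: "(shift ^^ k) -` C \<in> Z" by (simp add: space_seq Z_def)
  have "measure m ((shift ^^ Suc k) -` C) = measure m (shift -` ((shift ^^ k) -` C))"
    by (simp only: funpow_Suc_right vimage_comp)
  also have "\<dots> = measure m ((shift ^^ k) -` C)"
    using st meas unfolding shift_invariant_prob_def measure_def by auto
  also have "\<dots> = measure m C" by (rule Suc.IH)
  finally show ?case .
qed

theorem theorem4:
  fixes m :: "(nat \<Rightarrow> 'a::{finite,linorder}) measure"
    and ms :: "(nat \<Rightarrow> 'a) \<Rightarrow> (nat \<Rightarrow> 'a) measure"
  assumes stationary: "shift_invariant_prob m"
    and ms_ergodic: "\<And>s. ergodic_prob (ms s)"
    and ms_shift: "\<And>s. ms (shift s) = ms s"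
    and ms_meas: "\<And>C. C \<in> Z \<Longrightarrow> (\<lambda>s. measure (ms s) C) \<in> borel_measurable m"
    and ms_decomp: "\<And>C. C \<in> Z \<Longrightarrow> measure m C = (\<integral>s. measure (ms s) C \<partial>m)"
    and h_integrable: "integrable m (\<lambda>s. entropy_rate (ms s))"
  shows "ereal (entropy_rate m)
           \<le> liminf (\<lambda>L. ereal (shannon_entropy m (rank_block L) / (real L - 1)))"
proof -
  have P: "prob_space m" using stationary unfolding shift_invariant_prob_def by blast
  have sm: "sets m = Z" using stationary unfolding shift_invariant_prob_def by blast
  have sp: "space m = UNIV" by (rule space_Z[OF sm])
  define a where "a n = shannon_entropy m (block n)" for n
  have sf_block: "simple_function m (block n)" for n
    by (rule fin_dep_simple[OF sm, of n]) (rule block_dep)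
  have sf_shift: "simple_function m (\<lambda>x. block M ((shift^^L) x))" for L M
  proof (rule fin_dep_simple[OF sm, of "L+M"])
    fix x y :: "nat \<Rightarrow> 'a" assume h: "\<forall>i<L+M. x i = y i"
    show "block M ((shift^^L) x) = block M ((shift^^L) y)"
      by (rule block_dep) (use h in \<open>auto simp: funpow_shift\<close>)
  qed
  have stat_H: "shannon_entropy m (\<lambda>x. block M ((shift^^L) x)) = a M" for L M
  proof -
    have img: "(\<lambda>x. block M ((shift^^L) x)) ` space m = block M ` space m"
    proof
      show "(\<lambda>x. block M ((shift^^L) x)) ` space m \<subseteq> block M ` space m" using sp by auto
      show "block M ` space m \<subseteq> (\<lambda>x. block M ((shift^^L) x)) ` space m"
      proof
        fix v assume "v \<in> block M ` space m"
        then obtain y where v: "v = block M y" by auto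
        have "(shift^^L) (\<lambda>n. y (n - L)) = y" by (simp add: funpow_shift)
        then show "v \<in> (\<lambda>x. block M ((shift^^L) x)) ` space m" using v sp
          by (metis UNIV_I image_eqI)
      qed
    qed
    have Cv: "block M -` {v} \<inter> space m \<in> Z" for v
    proof -
      have "block M \<in> measurable m (count_space UNIV)"
        using sf_block simple_function_eq_measurable by blast
      then have "block M -` {v} \<inter> space m \<in> sets m" by (rule measurable_sets) simp
      then show ?thesis using sm by simp
    qed
    have pre: "(\<lambda>x. block M ((shift^^L) x)) -` {v} \<inter> space m = (shift^^L) -` (block M -` {v} \<inter> space m)" for v
      using sp by auto
    show ?thesis unfolding a_def shannon_entropy_def img
      by (intro arg_cong[where f=uminus] sum.cong refl) (simp only: pre stat_measure[OF stationary Cv])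
  qed
  have nn: "a n \<ge> 0" for n unfolding a_def by (rule sh_nonneg[OF P])
  have sub: "a (L+M) \<le> a L + a M" for L M
  proof -
    have eq: "block (L+M) = (\<lambda>(u,w). u @ w) \<circ> (\<lambda>x. (block L x, block M ((shift^^L) x)))"
      by (rule ext) (simp add: block_split)
    have "a (L+M) = shannon_entropy m ((\<lambda>(u,w). u @ w) \<circ> (\<lambda>x. (block L x, block M ((shift^^L) x))))"
      unfolding a_def eq ..
    also have "\<dots> \<le> shannon_entropy m (\<lambda>x. (block L x, block M ((shift^^L) x)))"
      by (rule sh_dp[OF P simple_function_Pair[OF sf_block sf_shift]])
    also have "\<dots> \<le> a L + shannon_entropy m (\<lambda>x. block M ((shift^^L) x))"
      unfolding a_def by (rule sh_subadd[OF P sf_block sf_shift])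
    finally show ?thesis using stat_H by simp
  qed
  have conv: "(\<lambda>n. a n / real n) \<longlonglongrightarrow> entropy_rate m"
    using fekete[OF nn sub] unfolding entropy_rate_def a_def convergent_LIMSEQ_iff by simp
  define c where "c = real CARD('a)"
  have bound: "a L \<le> shannon_entropy m (rank_block L) + c * log 2 (real L + 1)" for L
  proof -
    define P' where "P' (x::nat \<Rightarrow> 'a) = (rank_block L x, cnt L x)" for x
    define g where "g p = block L (SOME x::nat \<Rightarrow> 'a. P' x = p)" for p
    have beq: "block L = g \<circ> P'"
    proof
      fix x
      have ex: "P' (SOME x'. P' x' = P' x) = P' x" using someI[of "\<lambda>x'. P' x' = P' x" x] by simp
      then have "\<forall>i<L. (SOME x'. P' x' = P' x) i = x i"
        using rank_cnt_inj unfolding P'_def by auto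
      then have "block L (SOME x'. P' x' = P' x) = block L x" by (rule block_dep)
      then show "block L x = (g \<circ> P') x" unfolding g_def by simp
    qed
    have sf_R: "simple_function m (rank_block L)"
      by (rule fin_dep_simple[OF sm, of L]) (rule rank_block_dep)
    have sf_C: "simple_function m (cnt L)"
      by (rule fin_dep_simple[OF sm, of L]) (rule cnt_dep)
    have P'eq: "P' = (\<lambda>x. (rank_block L x, cnt L x))" unfolding P'_def by (rule ext) simp
    have "a L = shannon_entropy m (g \<circ> P')" unfolding a_def beq ..
    also have "\<dots> \<le> shannon_entropy m P'"
      unfolding P'eq by (rule sh_dp[OF P simple_function_Pair[OF sf_R sf_C]])
    also have "\<dots> \<le> shannon_entropy m (rank_block L) + shannon_entropy m (cnt L)"
      unfolding P'eq by (rule sh_subadd[OF P sf_R sf_C])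
    also have "shannon_entropy m (cnt L) \<le> log 2 (real (card (cnt L ` space m)))"
      by (rule sh_card[OF P sf_C])
    also have "\<dots> \<le> log 2 (real ((Suc L) ^ CARD('a)))"
    proof -
      have fin: "finite (cnt L ` space m)" using sf_C unfolding simple_function_def by blast
      have "cnt L ` space m \<noteq> {}" using sp by simp
      then have pos: "card (cnt L ` space m) > 0" using fin by (simp add: card_gt_0_iff)
      have "card (cnt L ` space m) \<le> (Suc L) ^ CARD('a)" using cnt_card[of L] sp by simp
      then have c1: "real (card (cnt L ` space m)) \<le> real ((Suc L) ^ CARD('a))" by (rule of_nat_mono)
      show ?thesis by (rule log_mono) (use pos c1 in auto)
    qed
    also have "log 2 (real ((Suc L) ^ CARD('a))) = c * log 2 (real L + 1)"
      unfolding c_def by (simp add: log_nat_power add.commute)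
    finally show ?thesis by simp
  qed
  define g2 where "g2 L = (a L - c * log 2 (real L + 1)) / (real L - 1)" for L
  have lim1: "(\<lambda>L. real L / (real L - 1)) \<longlonglongrightarrow> 1" by real_asymp
  have lim2: "(\<lambda>L. log 2 (real L + 1) / (real L - 1)) \<longlonglongrightarrow> 0" by real_asymp
  have lim0: "(\<lambda>L. a L / real L * (real L / (real L - 1)) - c * (log 2 (real L + 1) / (real L - 1)))
          \<longlonglongrightarrow> entropy_rate m * 1 - c * 0"
    by (intro tendsto_intros conv lim1 lim2)
  have ev: "eventually (\<lambda>L. a L / real L * (real L / (real L - 1)) - c * (log 2 (real L + 1) / (real L - 1)) = g2 L) sequentially"
    using eventually_ge_at_top[of 2]
  proof eventually_elim
    case (elim L)
    then have L0: "real L \<noteq> 0" by auto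
    have "a L / real L * (real L / (real L - 1)) = (a L * real L) / ((real L - 1) * real L)"
      by (simp only: times_divide_times_eq mult.commute[of "real L" "real L - 1"])
    also have "\<dots> = a L / (real L - 1)" by (rule nonzero_mult_divide_mult_cancel_right) (rule L0)
    finally have e: "a L / real L * (real L / (real L - 1)) = a L / (real L - 1)" .
    show ?case unfolding g2_def e by (simp only: diff_divide_distrib times_divide_eq_right)
  qed
  have lim3: "g2 \<longlonglongrightarrow> entropy_rate m"
    using Lim_transform_eventually[OF lim0 ev] by simp
  have lim4: "(\<lambda>L. ereal (g2 L)) \<longlonglongrightarrow> ereal (entropy_rate m)" using lim3 by (rule tendsto_ereal)
  have "liminf (\<lambda>L. ereal (g2 L)) = ereal (entropy_rate m)"
    by (rule lim_imp_Liminf[OF trivial_limit_sequentially lim4])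
  then have "ereal (entropy_rate m) = liminf (\<lambda>L. ereal (g2 L))" by (rule sym)
  also have "\<dots> \<le> liminf (\<lambda>L. ereal (shannon_entropy m (rank_block L) / (real L - 1)))"
  proof (intro Liminf_mono)
    show "eventually (\<lambda>L. ereal (g2 L) \<le> ereal (shannon_entropy m (rank_block L) / (real L - 1))) sequentially"
      using eventually_ge_at_top[of 2]
    proof eventually_elim
      case (elim L)
      then have pos: "real L - 1 \<ge> 0" by auto
      have "a L - c * log 2 (real L + 1) \<le> shannon_entropy m (rank_block L)" using bound[of L] by linarith
      then have "g2 L \<le> shannon_entropy m (rank_block L) / (real L - 1)"
        unfolding g2_def using pos by (rule divide_right_mono)
      then show ?case by (simp only: ereal_less_eq)
    qed
  qed
  finally show ?thesis .
qed

end
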